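(* Let $(\mathfrak{g},[\cdot,\cdot]_{\mathfrak{g}},\phi_{\mathfrak{g}})$ and $(\mathfrak{g}^*,[\cdot,\cdot]_{\mathfrak{g}^*},\phi_{\mathfrak{g}}^* )$ be two weakly involutive Hom-Lie algebras ($\mathfrak g$ finite-dimensional). Then $(\mathfrak g,\mathfrak g^*;\mathrm{ad}^\circ,\mathfrak{ad}^\circ)$ is a matched pair of Hom-Lie algebras if and only if $\Delta[x,y]_{\mathfrak g}=\mathrm{ad}_{\phi_{\mathfrak g}(x)}\Delta(y)-\mathrm{ad}_{\phi_{\mathfrak g}(y)}\Delta(x)$ for all $x,y\in\mathfrak g$, where $\Delta:\mathfrak g\to\mathfrak g\otimes\mathfrak g$ is defined by $\langle\Delta(x),a\otimes b\rangle=\langle x,[a,b]_{\mathfrak g^*}\rangle$.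
   Context: A Hom-Lie algebra $(\mathfrak{h},[\cdot,\cdot]_{\mathfrak{h}},\phi_{\mathfrak{h}})$: skew-symmetric bilinear bracket and linear map with $\phi_{\mathfrak h}[x,y]=[\phi_{\mathfrak h}x,\phi_{\mathfrak h}y]$ and $[\phi_{\mathfrak h}(x),[y,z]]+[\phi_{\mathfrak h}(y),[z,x]]+[\phi_{\mathfrak h}(z),[x,y]]=0$; weakly involutive if $[\phi_{\mathfrak h}^2(x),y]=[x,y]$. A representation $(V,\beta,\rho)$: $\beta\in\mathfrak{gl}(V)$, $\rho:\mathfrak h\to\mathfrak{gl}(V)$ with $\rho(\phi_{\mathfrak h}(x))\beta=\beta\rho(x)$ and $\rho([x,y])\beta=\rho(\phi_{\mathfrak h}(x))\rho(y)-\rho(\phi_{\mathfrak h}(y))\rho(x)$. For $z\in\mathfrak g$, $t\in\mathfrak g\otimes\mathfrak g$: $\mathrm{ad}_zt=(\mathrm{ad}_z\otimes\phi_{\mathfrak g}+\phi_{\mathfrak g}\otimes\mathrm{ad}_z)t$, $\mathrm{ad}_zy=[z,y]_{\mathfrak g}$. $\mathrm{ad}^\circ:\mathfrak g\to\mathfrak{gl}(\mathfrak g^* )$, $\langle\mathrm{ad}^\circ_xa,y\rangle=-\langle a,[\phi_{\mathfrak g}(x),y]_{\mathfrak g}\rangle$; $\mathfrak{ad}^\circ:\mathfrak g^*\to\mathfrak{gl}(\mathfrak g)$, $\langle\mathfrak{ad}^\circ_ax,b\rangle=-\langle x,[\phi_{\mathfrak g}^*(a),b]_{\mathfrak g^*}\rangle$.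 A matched pair $(\mathfrak g,\mathfrak g';\rho,\rho')$ of Hom-Lie algebras: Hom-Lie algebras $\mathfrak g,\mathfrak g'$, a representation $(\mathfrak g',\phi_{\mathfrak g'},\rho)$ of $\mathfrak g$ and a representation $(\mathfrak g,\phi_{\mathfrak g},\rho')$ of $\mathfrak g'$ with, for all $x,y\in\mathfrak g$, $x',y'\in\mathfrak g'$: $\rho'(\phi_{\mathfrak g'}(x'))[x,y]_{\mathfrak g}=[\rho'(x')x,\phi_{\mathfrak g}(y)]_{\mathfrak g}+[\phi_{\mathfrak g}(x),\rho'(x')y]_{\mathfrak g}+\rho'(\rho(y)x')\phi_{\mathfrak g}(x)-\rho'(\rho(x)x')\phi_{\mathfrak g}(y)$ and $\rho(\phi_{\mathfrak g}(x))[x',y']_{\mathfrak g'}=[\rho(x)x',\phi_{\mathfrak g'}(y')]_{\mathfrak g'}+[\phi_{\mathfrak g'}(x'),\rho(x)y']_{\mathfrak g'}+\rho(\rho'(y')x)\phi_{\mathfrak g'}(x')-\rho(\rho'(x')x)\phi_{\mathfrak g'}(y')$. *)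

theory Defs
  imports Main
begin

text \<open>Coordinate model: a finite-dimensional space over a field 'k with a basis indexed
by a finite type 'i is the function space 'i => 'k.  The dual space g* is again 'i => 'k,
with the canonical pairing; g (x) g is ('i * 'i) => 'k.\<close>

definition vadd :: "('i \<Rightarrow> 'k::field) \<Rightarrow> ('i \<Rightarrow> 'k) \<Rightarrow> ('i \<Rightarrow> 'k)" where
  "vadd x y = (\<lambda>i. x i + y i)"

definition vsub :: "('i \<Rightarrow> 'k::field) \<Rightarrow> ('i \<Rightarrow> 'k) \<Rightarrow> ('i \<Rightarrow> 'k)" where
  "vsub x y = (\<lambda>i. x i - y i)"

definition vneg :: "('i \<Rightarrow> 'k::field) \<Rightarrow> ('i \<Rightarrow> 'k)" where
  "vneg x = (\<lambda>i. - x i)"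

definition smul :: "'k::field \<Rightarrow> ('i \<Rightarrow> 'k) \<Rightarrow> ('i \<Rightarrow> 'k)" where
  "smul c x = (\<lambda>i. c * x i)"

definition basis_vec :: "'i \<Rightarrow> ('i \<Rightarrow> 'k::field)" where
  "basis_vec i = (\<lambda>j. if j = i then 1 else 0)"

definition pair :: "('i::finite \<Rightarrow> 'k::field) \<Rightarrow> ('i \<Rightarrow> 'k) \<Rightarrow> 'k" where
  "pair x a = (\<Sum>i\<in>UNIV. x i * a i)"

definition lin_map :: "(('i \<Rightarrow> 'k::field) \<Rightarrow> ('j \<Rightarrow> 'k)) \<Rightarrow> bool" where
  "lin_map f \<longleftrightarrow> (\<forall>x y. f (vadd x y) = vadd (f x) (f y)) \<and> (\<forall>c x. f (smul c x) = smul c (f x))"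

definition bilin :: "(('i \<Rightarrow> 'k::field) \<Rightarrow> ('i \<Rightarrow> 'k) \<Rightarrow> ('i \<Rightarrow> 'k)) \<Rightarrow> bool" where
  "bilin br \<longleftrightarrow> (\<forall>x. lin_map (br x)) \<and> (\<forall>y. lin_map (\<lambda>x. br x y))"

definition hom_lie :: "(('i \<Rightarrow> 'k::field) \<Rightarrow> ('i \<Rightarrow> 'k) \<Rightarrow> ('i \<Rightarrow> 'k)) \<Rightarrow> (('i \<Rightarrow> 'k) \<Rightarrow> ('i \<Rightarrow> 'k)) \<Rightarrow> bool" where
  "hom_lie br \<phi> \<longleftrightarrow> bilin br \<and> lin_map \<phi> \<and> (\<forall>x y. br x y = vneg (br y x))
     \<and> (\<forall>x y. \<phi> (br x y) = br (\<phi> x) (\<phi> y))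
     \<and> (\<forall>x y z. vadd (vadd (br (\<phi> x) (br y z)) (br (\<phi> y) (br z x))) (br (\<phi> z) (br x y))
                 = (\<lambda>_. 0))"

definition weakly_involutive :: "(('i \<Rightarrow> 'k::field) \<Rightarrow> ('i \<Rightarrow> 'k) \<Rightarrow> ('i \<Rightarrow> 'k)) \<Rightarrow> (('i \<Rightarrow> 'k) \<Rightarrow> ('i \<Rightarrow> 'k)) \<Rightarrow> bool" where
  "weakly_involutive br \<phi> \<longleftrightarrow> (\<forall>x y. br (\<phi> (\<phi> x)) y = br x y)"

definition hom_rep :: "(('i \<Rightarrow> 'k::field) \<Rightarrow> ('i \<Rightarrow> 'k) \<Rightarrow> ('i \<Rightarrow> 'k)) \<Rightarrow> (('i \<Rightarrow> 'k) \<Rightarrow> ('i \<Rightarrow> 'k))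
     \<Rightarrow> (('j \<Rightarrow> 'k) \<Rightarrow> ('j \<Rightarrow> 'k)) \<Rightarrow> (('i \<Rightarrow> 'k) \<Rightarrow> ('j \<Rightarrow> 'k) \<Rightarrow> ('j \<Rightarrow> 'k)) \<Rightarrow> bool" where
  "hom_rep br \<phi> \<beta> \<rho> \<longleftrightarrow> lin_map \<beta> \<and> (\<forall>x y v. \<rho> (vadd x y) v = vadd (\<rho> x v) (\<rho> y v)) \<and> (\<forall>c x v. \<rho> (smul c x) v = smul c (\<rho> x v)) \<and> (\<forall>x. lin_map (\<rho> x))
     \<and> (\<forall>x v. \<rho> (\<phi> x) (\<beta> v) = \<beta> (\<rho> x v))
     \<and> (\<forall>x y v. \<rho> (br x y) (\<beta> v) = vsub (\<rho> (\<phi> x) (\<rho> y v)) (\<rho> (\<phi> y) (\<rho> x v)))"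

definition matched_pair ::
  "(('i \<Rightarrow> 'k::field) \<Rightarrow> ('i \<Rightarrow> 'k) \<Rightarrow> ('i \<Rightarrow> 'k)) \<Rightarrow> (('i \<Rightarrow> 'k) \<Rightarrow> ('i \<Rightarrow> 'k))
   \<Rightarrow> (('j \<Rightarrow> 'k) \<Rightarrow> ('j \<Rightarrow> 'k) \<Rightarrow> ('j \<Rightarrow> 'k)) \<Rightarrow> (('j \<Rightarrow> 'k) \<Rightarrow> ('j \<Rightarrow> 'k))
   \<Rightarrow> (('i \<Rightarrow> 'k) \<Rightarrow> ('j \<Rightarrow> 'k) \<Rightarrow> ('j \<Rightarrow> 'k)) \<Rightarrow> (('j \<Rightarrow> 'k) \<Rightarrow> ('i \<Rightarrow> 'k) \<Rightarrow> ('i \<Rightarrow> 'k)) \<Rightarrow> bool" where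
  "matched_pair br \<phi> br' \<phi>' \<rho> \<rho>' \<longleftrightarrow>
     hom_lie br \<phi> \<and> hom_lie br' \<phi>' \<and> hom_rep br \<phi> \<phi>' \<rho> \<and> hom_rep br' \<phi>' \<phi> \<rho>'
     \<and> (\<forall>x y x'. \<rho>' (\<phi>' x') (br x y) =
          vsub (vadd (vadd (br (\<rho>' x' x) (\<phi> y)) (br (\<phi> x) (\<rho>' x' y))) (\<rho>' (\<rho> y x') (\<phi> x)))
               (\<rho>' (\<rho> x x') (\<phi> y)))
     \<and> (\<forall>x x' y'. \<rho> (\<phi> x) (br' x' y') =
          vsub (vadd (vadd (br' (\<rho> x x') (\<phi>' y')) (br' (\<phi>' x') (\<rho> x y'))) (\<rho> (\<rho>' y' x) (\<phi>' x')))
               (\<rho> (\<rho>' x' x) (\<phi>' y')))"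

text \<open>Dual map f*: <f* a, x> = <a, f x>.\<close>
definition dual_map :: "(('i::finite \<Rightarrow> 'k::field) \<Rightarrow> ('i \<Rightarrow> 'k)) \<Rightarrow> ('i \<Rightarrow> 'k) \<Rightarrow> ('i \<Rightarrow> 'k)" where
  "dual_map f a = (\<lambda>i. pair (f (basis_vec i)) a)"

text \<open>ad-circ: <ad_x a, y> = - <a, [phi x, y]>.\<close>
definition ad_circ :: "(('i::finite \<Rightarrow> 'k::field) \<Rightarrow> ('i \<Rightarrow> 'k) \<Rightarrow> ('i \<Rightarrow> 'k)) \<Rightarrow> (('i \<Rightarrow> 'k) \<Rightarrow> ('i \<Rightarrow> 'k))
     \<Rightarrow> ('i \<Rightarrow> 'k) \<Rightarrow> ('i \<Rightarrow> 'k) \<Rightarrow> ('i \<Rightarrow> 'k)" where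
  "ad_circ br \<phi> x a = (\<lambda>i. - pair (br (\<phi> x) (basis_vec i)) a)"

text \<open>frak-ad-circ: <ad_a x, b> = - <x, [phi* a, b]_*>.\<close>
definition ad_circ_dual :: "(('i::finite \<Rightarrow> 'k::field) \<Rightarrow> ('i \<Rightarrow> 'k) \<Rightarrow> ('i \<Rightarrow> 'k)) \<Rightarrow> (('i \<Rightarrow> 'k) \<Rightarrow> ('i \<Rightarrow> 'k))
     \<Rightarrow> ('i \<Rightarrow> 'k) \<Rightarrow> ('i \<Rightarrow> 'k) \<Rightarrow> ('i \<Rightarrow> 'k)" where
  "ad_circ_dual brd \<phi> a x = (\<lambda>i. - pair x (brd (dual_map \<phi> a) (basis_vec i)))"

text \<open>Tensors in g (x) g as coefficient arrays; (A (x) B) for linear maps A, B.\<close>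
definition tensor_map :: "(('i::finite \<Rightarrow> 'k::field) \<Rightarrow> ('i \<Rightarrow> 'k)) \<Rightarrow> (('i \<Rightarrow> 'k) \<Rightarrow> ('i \<Rightarrow> 'k))
     \<Rightarrow> ('i \<times> 'i \<Rightarrow> 'k) \<Rightarrow> ('i \<times> 'i \<Rightarrow> 'k)" where
  "tensor_map A B t = (\<lambda>(i, j). \<Sum>k\<in>UNIV. \<Sum>l\<in>UNIV. A (basis_vec k) i * B (basis_vec l) j * t (k, l))"

definition ad_tensor :: "(('i::finite \<Rightarrow> 'k::field) \<Rightarrow> ('i \<Rightarrow> 'k) \<Rightarrow> ('i \<Rightarrow> 'k)) \<Rightarrow> (('i \<Rightarrow> 'k) \<Rightarrow> ('i \<Rightarrow> 'k))
     \<Rightarrow> ('i \<Rightarrow> 'k) \<Rightarrow> ('i \<times> 'i \<Rightarrow> 'k) \<Rightarrow> ('i \<times> 'i \<Rightarrow> 'k)" where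
  "ad_tensor br \<phi> z t = (\<lambda>p. tensor_map (br z) \<phi> t p + tensor_map \<phi> (br z) t p)"

text \<open>Delta: <Delta x, a (x) b> = <x, [a, b]_*>, i.e. Delta x (i,j) = <x, [e_i, e_j]_*>.\<close>
definition Delta :: "(('i::finite \<Rightarrow> 'k::field) \<Rightarrow> ('i \<Rightarrow> 'k) \<Rightarrow> ('i \<Rightarrow> 'k)) \<Rightarrow> ('i \<Rightarrow> 'k) \<Rightarrow> ('i \<times> 'i \<Rightarrow> 'k)" where
  "Delta brd x = (\<lambda>(i, j). pair x (brd (basis_vec i) (basis_vec j)))"

end

theory Submission
  imports Defs
begin

lemma pair_vadd_l: "pair (vadd x y) a = pair x a + pair y a"
  by (simp add: pair_def vadd_def sum.distrib distrib_right)
lemma pair_vadd_r: "pair a (vadd x y) = pair a x + pair a y"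
  by (simp add: pair_def vadd_def sum.distrib distrib_left)
lemma pair_smul_l: "pair (smul c x) a = c * pair x a"
  by (simp add: pair_def smul_def sum_distrib_left mult.assoc)
lemma pair_smul_r: "pair a (smul c x) = c * pair a x"
  by (simp add: pair_def smul_def sum_distrib_left mult.left_commute)
lemma pair_vneg_l: "pair (vneg x) a = - pair x a"
  by (simp add: pair_def vneg_def sum_negf)
lemma pair_vneg_r: "pair a (vneg x) = - pair a x"
  by (simp add: pair_def vneg_def sum_negf)
lemma pair_vsub_l: "pair (vsub x y) a = pair x a - pair y a"
  by (simp add: pair_def vsub_def sum_subtractf left_diff_distrib)
lemma pair_vsub_r: "pair a (vsub x y) = pair a x - pair a y"
  by (simp add: pair_def vsub_def sum_subtractf right_diff_distrib)
lemma pair_zero_l: "pair (\<lambda>_. 0) a = 0" by (simp add: pair_def)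
lemma pair_zero_r: "pair a (\<lambda>_. 0) = 0" by (simp add: pair_def)
lemma pair_basis_l: "pair (basis_vec i) a = a i"
proof -
  have "pair (basis_vec i) a = (\<Sum>j\<in>UNIV. if j = i then a j else 0)"
    unfolding pair_def basis_vec_def by (rule sum.cong) auto
  then show ?thesis by simp
qed
lemma pair_basis_r: "pair a (basis_vec i) = a i"
proof -
  have "pair a (basis_vec i) = (\<Sum>j\<in>UNIV. if j = i then a j else 0)"
    unfolding pair_def basis_vec_def by (rule sum.cong) auto
  then show ?thesis by simp
qed
lemma pair_comm: "pair x a = pair a x"
  by (simp add: pair_def mult.commute)

lemmas pair_simps = pair_vadd_l pair_vadd_r pair_smul_l pair_smul_r pair_vneg_l pair_vneg_r
  pair_vsub_l pair_vsub_r pair_zero_l pair_zero_r pair_basis_l pair_basis_r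

lemma vec_eq_l: "(\<And>b. pair u b = pair v b) \<Longrightarrow> u = v"
proof (rule ext)
  fix i assume "\<And>b. pair u b = pair v b"
  from this[of "basis_vec i"] show "u i = v i" by (simp add: pair_basis_r)
qed
lemma vec_eq_r: "(\<And>b. pair b u = pair b v) \<Longrightarrow> u = v"
  by (rule vec_eq_l) (simp add: pair_comm)

lemma lin_zero: "lin_map f \<Longrightarrow> f (\<lambda>_. 0) = (\<lambda>_. 0)"
proof -
  assume "lin_map f"
  then have "f (smul 0 (\<lambda>_. 0)) = smul 0 (f (\<lambda>_. 0))" by (simp add: lin_map_def)
  then show ?thesis by (simp add: smul_def)
qed

lemma lin_expand_aux:
  assumes f: "lin_map f" and A: "finite A"
  shows "f (\<lambda>j. \<Sum>i\<in>A. x i * basis_vec i j) = (\<lambda>j. \<Sum>i\<in>A. x i * f (basis_vec i) j)"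
  using A
proof (induction A rule: finite_induct)
  case empty then show ?case using lin_zero[OF f] by simp
next
  case (insert i A)
  have "(\<lambda>j. \<Sum>i\<in>insert i A. x i * basis_vec i j) = vadd (smul (x i) (basis_vec i)) (\<lambda>j. \<Sum>i\<in>A. x i * basis_vec i j)"
    using insert by (simp add: vadd_def smul_def)
  then have "f (\<lambda>j. \<Sum>i\<in>insert i A. x i * basis_vec i j) = vadd (smul (x i) (f (basis_vec i))) (f (\<lambda>j. \<Sum>i\<in>A. x i * basis_vec i j))"
    using f by (simp add: lin_map_def)
  then show ?case using insert by (simp add: vadd_def smul_def)
qed

lemma lin_expand:
  fixes f :: "('i::finite \<Rightarrow> 'k::field) \<Rightarrow> ('j \<Rightarrow> 'k)"
  assumes "lin_map f"
  shows "f x = (\<lambda>j. \<Sum>i\<in>UNIV. x i * f (basis_vec i) j)"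
proof -
  have "x = (\<lambda>j. \<Sum>i\<in>UNIV. x i * basis_vec i j)"
  proof
    fix j
    have "(\<Sum>i\<in>UNIV. x i * basis_vec i j) = (\<Sum>i\<in>UNIV. if j = i then x i else 0)"
      unfolding basis_vec_def by (rule sum.cong) auto
    then show "x j = (\<Sum>i\<in>UNIV. x i * basis_vec i j)" by simp
  qed
  then have "f x = f (\<lambda>j. \<Sum>i\<in>UNIV. x i * basis_vec i j)" by (rule arg_cong)
  also have "\<dots> = (\<lambda>j. \<Sum>i\<in>UNIV. x i * f (basis_vec i) j)"
    by (rule lin_expand_aux[OF assms]) simp
  finally show ?thesis .
qed

lemma lin_pair_expand:
  fixes f :: "('i::finite \<Rightarrow> 'k::field) \<Rightarrow> ('j::finite \<Rightarrow> 'k)"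
  assumes "lin_map f"
  shows "pair y (f x) = (\<Sum>i\<in>UNIV. x i * pair y (f (basis_vec i)))"
proof -
  have "pair y (f x) = (\<Sum>m\<in>UNIV. y m * (\<Sum>i\<in>UNIV. x i * f (basis_vec i) m))"
    unfolding pair_def by (subst lin_expand[OF assms]) (rule refl)
  also have "\<dots> = (\<Sum>m\<in>UNIV. \<Sum>i\<in>UNIV. x i * (y m * f (basis_vec i) m))"
    by (simp add: sum_distrib_left mult.left_commute)
  also have "\<dots> = (\<Sum>i\<in>UNIV. \<Sum>m\<in>UNIV. x i * (y m * f (basis_vec i) m))"
    by (rule sum.swap)
  also have "\<dots> = (\<Sum>i\<in>UNIV. x i * pair y (f (basis_vec i)))"
    by (simp add: pair_def sum_distrib_left)
  finally show ?thesis .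
qed

lemma scalar_expand:
  fixes f :: "('i::finite \<Rightarrow> 'k::field) \<Rightarrow> 'k"
  assumes "\<And>u v. f (vadd u v) = f u + f v" and "\<And>c u. f (smul c u) = c * f u"
  shows "f x = (\<Sum>i\<in>UNIV. x i * f (basis_vec i))"
proof -
  have "lin_map (\<lambda>v. (\<lambda>_::unit. f v))"
    using assms by (simp add: lin_map_def vadd_def smul_def)
  from lin_expand[OF this, of x] show ?thesis by (metis)
qed

lemma scalar_zero:
  fixes f :: "('i::finite \<Rightarrow> 'k::field) \<Rightarrow> 'k"
  assumes "\<And>u v. f (vadd u v) = f u + f v" and "\<And>c u. f (smul c u) = c * f u"
    and "\<And>i. f (basis_vec i) = 0"
  shows "f x = 0"
  using scalar_expand[OF assms(1,2), of x] assms(3) by simp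

lemma dual_map_pair:
  assumes "lin_map f"
  shows "pair x (dual_map f a) = pair (f x) a"
proof -
  have "pair (f x) a = pair a (f x)" by (rule pair_comm)
  also have "\<dots> = (\<Sum>i\<in>UNIV. x i * pair a (f (basis_vec i)))" by (rule lin_pair_expand[OF assms])
  also have "\<dots> = pair x (dual_map f a)"
    by (simp add: pair_def dual_map_def mult.commute)
  finally show ?thesis by simp
qed

lemma lin_dual_map: "lin_map (dual_map f)"
  by (simp add: lin_map_def dual_map_def pair_def smul_def vadd_def sum.distrib distrib_left sum_distrib_left mult.left_commute)

lemma dual_dual: "lin_map f \<Longrightarrow> dual_map (dual_map f) = f"
proof (rule ext, rule ext)
  fix x i assume f: "lin_map f"
  have "dual_map (dual_map f) x i = pair (dual_map f (basis_vec i)) x" by (simp add: dual_map_def)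
  also have "\<dots> = pair x (dual_map f (basis_vec i))" by (rule pair_comm)
  also have "\<dots> = pair (f x) (basis_vec i)" by (rule dual_map_pair[OF f])
  also have "\<dots> = f x i" by (rule pair_basis_r)
  finally show "dual_map (dual_map f) x i = f x i" .
qed

lemma ad_circ_as_dual: "ad_circ br f x a = vneg (dual_map (br (f x)) a)"
  by (simp add: ad_circ_def vneg_def dual_map_def)

lemma adcd_as_dual: "ad_circ_dual brd f a x = vneg (dual_map (brd (dual_map f a)) x)"
  unfolding ad_circ_dual_def vneg_def dual_map_def by (subst pair_comm) (rule refl)

locale hctx =
  fixes brg :: "('i::finite \<Rightarrow> 'k::field) \<Rightarrow> ('i \<Rightarrow> 'k) \<Rightarrow> ('i \<Rightarrow> 'k)"
    and \<phi> :: "('i \<Rightarrow> 'k) \<Rightarrow> ('i \<Rightarrow> 'k)"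
    and brd :: "('i \<Rightarrow> 'k) \<Rightarrow> ('i \<Rightarrow> 'k) \<Rightarrow> ('i \<Rightarrow> 'k)"
  assumes hg: "hom_lie brg \<phi>" and wg: "weakly_involutive brg \<phi>"
    and hd: "hom_lie brd (dual_map \<phi>)" and wd: "weakly_involutive brd (dual_map \<phi>)"
begin

abbreviation "ps \<equiv> dual_map \<phi>"
abbreviation "ad \<equiv> ad_circ brg \<phi>"
abbreviation "adc \<equiv> ad_circ_dual brd \<phi>"

lemma lin_phi: "lin_map \<phi>" using hg unfolding hom_lie_def by blast
lemma lin_ps: "lin_map ps" by (rule lin_dual_map)
lemma phi_add: "\<phi> (vadd x y) = vadd (\<phi> x) (\<phi> y)" using lin_phi by (simp add: lin_map_def)
lemma phi_smul: "\<phi> (smul c x) = smul c (\<phi> x)" using lin_phi by (simp add: lin_map_def)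
lemma ps_add: "ps (vadd x y) = vadd (ps x) (ps y)" using lin_ps by (simp add: lin_map_def)
lemma ps_smul: "ps (smul c x) = smul c (ps x)" using lin_ps by (simp add: lin_map_def)

lemma bg: "bilin brg" using hg unfolding hom_lie_def by blast
lemma bd: "bilin brd" using hd unfolding hom_lie_def by blast
lemma brg_add1: "brg (vadd x y) z = vadd (brg x z) (brg y z)" using bg by (simp add: bilin_def lin_map_def)
lemma brg_add2: "brg z (vadd x y) = vadd (brg z x) (brg z y)" using bg by (simp add: bilin_def lin_map_def)
lemma brg_smul1: "brg (smul c x) z = smul c (brg x z)" using bg by (simp add: bilin_def lin_map_def)
lemma brg_smul2: "brg z (smul c x) = smul c (brg z x)" using bg by (simp add: bilin_def lin_map_def)
lemma brd_add1: "brd (vadd x y) z = vadd (brd x z) (brd y z)" using bd by (simp add: bilin_def lin_map_def)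
lemma brd_add2: "brd z (vadd x y) = vadd (brd z x) (brd z y)" using bd by (simp add: bilin_def lin_map_def)
lemma brd_smul1: "brd (smul c x) z = smul c (brd x z)" using bd by (simp add: bilin_def lin_map_def)
lemma brd_smul2: "brd z (smul c x) = smul c (brd z x)" using bd by (simp add: bilin_def lin_map_def)
lemma vneg_smul: "vneg x = smul (-1) x" by (simp add: vneg_def smul_def)
lemma brg_neg1: "brg (vneg x) z = vneg (brg x z)" by (simp add: vneg_smul brg_smul1)
lemma brg_neg2: "brg z (vneg x) = vneg (brg z x)" by (simp add: vneg_smul brg_smul2)
lemma brd_neg1: "brd (vneg x) z = vneg (brd x z)" by (simp add: vneg_smul brd_smul1)
lemma brd_neg2: "brd z (vneg x) = vneg (brd z x)" by (simp add: vneg_smul brd_smul2)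
lemma brg_skew: "brg x y = vneg (brg y x)" using hg unfolding hom_lie_def by blast
lemma brd_skew: "brd x y = vneg (brd y x)" using hd unfolding hom_lie_def by blast
lemma brg_hom: "\<phi> (brg x y) = brg (\<phi> x) (\<phi> y)" using hg unfolding hom_lie_def by blast
lemma brd_hom: "ps (brd x y) = brd (ps x) (ps y)" using hd unfolding hom_lie_def by blast
lemma wg': "brg (\<phi> (\<phi> x)) y = brg x y" using wg by (simp add: weakly_involutive_def)
lemma wd': "brd (ps (ps x)) y = brd x y" using wd by (simp add: weakly_involutive_def)
lemma jac_g: "vadd (vadd (brg (\<phi> x) (brg y z)) (brg (\<phi> y) (brg z x))) (brg (\<phi> z) (brg x y)) = (\<lambda>_. 0)"
  using hg unfolding hom_lie_def by blast
lemma jac_d: "vadd (vadd (brd (ps x) (brd y z)) (brd (ps y) (brd z x))) (brd (ps z) (brd x y)) = (\<lambda>_. 0)"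
  using hd unfolding hom_lie_def by blast

lemma pair_ps: "pair x (ps a) = pair (\<phi> x) a" by (rule dual_map_pair[OF lin_phi])
lemma lin_brg: "lin_map (brg z)" using bg by (simp add: bilin_def)
lemma pair_ad: "pair y (ad x a) = - pair (brg (\<phi> x) y) a"
  by (simp add: ad_circ_as_dual pair_simps dual_map_pair[OF lin_brg])
lemma pair_adc: "pair (adc a x) b = - pair x (brd (ps a) b)"
proof -
  have l: "lin_map (brd (ps a))" using bd by (simp add: bilin_def)
  show ?thesis
  proof -
    have "pair (adc a x) b = - pair (dual_map (brd (ps a)) x) b" by (simp add: adcd_as_dual pair_simps)
    also have "pair (dual_map (brd (ps a)) x) b = pair b (dual_map (brd (ps a)) x)" by (rule pair_comm)
    also have "\<dots> = pair (brd (ps a) b) x" by (rule dual_map_pair[OF l])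
    also have "\<dots> = pair x (brd (ps a) b)" by (rule pair_comm)
    finally show ?thesis .
  qed
qed

lemma pair_brg_skew: "pair (brg x y) a = - pair (brg y x) a"
  by (subst brg_skew) (simp add: pair_simps)
lemma pair_brd_skew: "pair x (brd a b) = - pair x (brd b a)"
  by (subst brd_skew) (simp add: pair_simps)

lemmas lsimps = pair_simps phi_add phi_smul ps_add ps_smul brg_add1 brg_add2 brg_smul1 brg_smul2
  brd_add1 brd_add2 brd_smul1 brd_smul2 brg_neg1 brg_neg2 brd_neg1 brd_neg2


lemma pair_ad': "pair (brg (\<phi> x) y) a = - pair y (ad x a)"
  by (simp add: pair_ad)

lemma ad_add1: "ad (vadd x y) v = vadd (ad x v) (ad y v)"
  by (rule vec_eq_r) (simp add: pair_ad lsimps)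
lemma ad_smul1: "ad (smul c x) v = smul c (ad x v)"
  by (rule vec_eq_r) (simp add: pair_ad lsimps)
lemma ad_add2: "ad x (vadd v w) = vadd (ad x v) (ad x w)"
  by (rule vec_eq_r) (simp add: pair_ad lsimps)
lemma ad_smul2: "ad x (smul c v) = smul c (ad x v)"
  by (rule vec_eq_r) (simp add: pair_ad lsimps)
lemma adc_add1: "adc (vadd a b) x = vadd (adc a x) (adc b x)"
  by (rule vec_eq_l) (simp add: pair_adc lsimps)
lemma adc_smul1: "adc (smul c a) x = smul c (adc a x)"
  by (rule vec_eq_l) (simp add: pair_adc lsimps)
lemma adc_add2: "adc a (vadd x y) = vadd (adc a x) (adc a y)"
  by (rule vec_eq_l) (simp add: pair_adc lsimps)
lemma adc_smul2: "adc a (smul c x) = smul c (adc a x)"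
  by (rule vec_eq_l) (simp add: pair_adc lsimps)

lemma rep1: "hom_rep brg \<phi> ps ad"
  unfolding hom_rep_def
proof (intro conjI allI)
  show "lin_map ps" by (rule lin_ps)
  fix x show "lin_map (ad x)" by (simp add: lin_map_def ad_add2 ad_smul2)
next
  fix x y v show "ad (vadd x y) v = vadd (ad x v) (ad y v)" by (rule ad_add1)
next
  fix c x v show "ad (smul c x) v = smul c (ad x v)" by (rule ad_smul1)
next
  fix x v show "ad (\<phi> x) (ps v) = ps (ad x v)"
    by (rule vec_eq_r) (simp add: pair_ad pair_ps wg' brg_hom)
next
  fix x y v show "ad (brg x y) (ps v) = vsub (ad (\<phi> x) (ad y v)) (ad (\<phi> y) (ad x v))"
  proof (rule vec_eq_r)
    fix z
    have h: "\<phi> (brg (\<phi> (brg x y)) z) = brg (brg x y) (\<phi> z)"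
      by (simp only: brg_hom[of "\<phi> (brg x y)"] wg')
    have L: "pair z (ad (brg x y) (ps v)) = pair (brg (\<phi> z) (brg x y)) v"
      by (simp add: pair_ad pair_ps h pair_brg_skew[of "brg x y"])
    have R: "pair z (vsub (ad (\<phi> x) (ad y v)) (ad (\<phi> y) (ad x v)))
       = pair (brg (\<phi> y) (brg x z)) v - pair (brg (\<phi> x) (brg y z)) v"
      by (simp add: pair_ad wg' pair_simps)
    have J: "pair (brg (\<phi> x) (brg y z)) v + pair (brg (\<phi> y) (brg z x)) v + pair (brg (\<phi> z) (brg x y)) v = 0"
      using arg_cong[OF jac_g[of x y z], of "\<lambda>w. pair w v"] by (simp add: pair_simps)
    have B: "brg z x = vneg (brg x z)" by (rule brg_skew)
    have J2: "pair (brg (\<phi> x) (brg y z)) v - pair (brg (\<phi> y) (brg x z)) v + pair (brg (\<phi> z) (brg x y)) v = 0"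
      using J by (simp add: B brg_neg2 pair_simps)
    show "pair z (ad (brg x y) (ps v)) = pair z (vsub (ad (\<phi> x) (ad y v)) (ad (\<phi> y) (ad x v)))"
      unfolding L R using J2 by algebra
  qed
qed

lemma rep2: "hom_rep brd ps \<phi> adc"
  unfolding hom_rep_def
proof (intro conjI allI)
  show "lin_map \<phi>" by (rule lin_phi)
  fix a show "lin_map (adc a)" by (simp add: lin_map_def adc_add2 adc_smul2)
next
  fix x y v show "adc (vadd x y) v = vadd (adc x v) (adc y v)" by (rule adc_add1)
next
  fix c x v show "adc (smul c x) v = smul c (adc x v)" by (rule adc_smul1)
next
  fix a x show "adc (ps a) (\<phi> x) = \<phi> (adc a x)"
    by (rule vec_eq_l) (simp add: pair_adc pair_ps[symmetric] wd' brd_hom)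
next
  fix a b x show "adc (brd a b) (\<phi> x) = vsub (adc (ps a) (adc b x)) (adc (ps b) (adc a x))"
  proof (rule vec_eq_l)
    fix c
    have h: "ps (brd (ps (brd a b)) c) = brd (brd a b) (ps c)"
      by (simp only: brd_hom[of "ps (brd a b)"] wd')
    have L: "pair (adc (brd a b) (\<phi> x)) c = pair x (brd (ps c) (brd a b))"
      by (simp add: pair_adc pair_ps[symmetric] h pair_brd_skew[of _ "brd a b"])
    have R: "pair (vsub (adc (ps a) (adc b x)) (adc (ps b) (adc a x))) c
       = pair x (brd (ps b) (brd a c)) - pair x (brd (ps a) (brd b c))"
      by (simp add: pair_adc wd' pair_simps)
    have J: "pair x (brd (ps a) (brd b c)) + pair x (brd (ps b) (brd c a)) + pair x (brd (ps c) (brd a b)) = 0"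
      using arg_cong[OF jac_d[of a b c], of "\<lambda>w. pair x w"] by (simp add: pair_simps)
    have B: "brd c a = vneg (brd a c)" by (rule brd_skew)
    have J2: "pair x (brd (ps a) (brd b c)) - pair x (brd (ps b) (brd a c)) + pair x (brd (ps c) (brd a b)) = 0"
      using J by (simp add: B brd_neg2 pair_simps)
    show "pair (adc (brd a b) (\<phi> x)) c = pair (vsub (adc (ps a) (adc b x)) (adc (ps b) (adc a x))) c"
      unfolding L R using J2 by algebra
  qed
qed


definition Rr where
  "Rr x y a b = pair y (brd (ad x a) (ps b)) + pair y (brd (ps a) (ad x b))
      - pair x (brd (ad y a) (ps b)) - pair x (brd (ps a) (ad y b))"

abbreviation "C1 \<equiv> (\<forall>x y x'. adc (ps x') (brg x y) =
          vsub (vadd (vadd (brg (adc x' x) (\<phi> y)) (brg (\<phi> x) (adc x' y))) (adc (ad y x') (\<phi> x)))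
               (adc (ad x x') (\<phi> y)))"
abbreviation "C2 \<equiv> (\<forall>x x' y'. ad (\<phi> x) (brd x' y') =
          vsub (vadd (vadd (brd (ad x x') (ps y')) (brd (ps x') (ad x y'))) (ad (adc y' x) (ps x')))
               (ad (adc x' x) (ps y')))"

lemma c1_pair: "pair (vsub (vadd (vadd (brg (adc a x) (\<phi> y)) (brg (\<phi> x) (adc a y))) (adc (ad y a) (\<phi> x)))
               (adc (ad x a) (\<phi> y))) b = Rr x y a b"
proof -
  have T1: "pair (brg (adc a x) (\<phi> y)) b = - pair x (brd (ps a) (ad y b))"
    by (simp add: pair_brg_skew[of "adc a x"] pair_ad' pair_adc)
  have T2: "pair (brg (\<phi> x) (adc a y)) b = pair y (brd (ps a) (ad x b))"
    by (simp add: pair_ad' pair_adc)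
  have T3: "pair (adc c (\<phi> z)) b = - pair z (brd c (ps b))" for c z
    by (simp add: pair_adc pair_ps[symmetric] brd_hom wd')
  show ?thesis by (simp add: pair_simps T1 T2 T3 Rr_def algebra_simps)
qed

lemma c1_L: "pair (adc (ps a) (brg x y)) b = - pair (brg x y) (brd a b)"
  by (simp add: pair_adc wd')

lemma c2_S: "pair y (ad (adc b x) (ps a)) = - pair x (brd (ad y a) (ps b))"
proof -
  let ?u = "adc b x"
  have "pair y (ad ?u (ps a)) = - pair (\<phi> (brg (\<phi> ?u) y)) a" by (simp add: pair_ad pair_ps)
  also have "\<phi> (brg (\<phi> ?u) y) = brg ?u (\<phi> y)" by (simp only: brg_hom[of "\<phi> ?u"] wg')
  also have "- pair (brg ?u (\<phi> y)) a = pair (brg (\<phi> y) ?u) a" by (simp add: pair_brg_skew[of ?u])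
  also have "\<dots> = - pair ?u (ad y a)" by (rule pair_ad')
  also have "\<dots> = pair x (brd (ps b) (ad y a))" by (simp add: pair_adc)
  also have "\<dots> = - pair x (brd (ad y a) (ps b))" by (rule pair_brd_skew)
  finally show ?thesis .
qed

lemma c2_pair: "pair y (vsub (vadd (vadd (brd (ad x a) (ps b)) (brd (ps a) (ad x b))) (ad (adc b x) (ps a)))
               (ad (adc a x) (ps b))) = Rr x y a b"
  using c2_S[of y b x a] c2_S[of y a x b] pair_brd_skew[of x "ad y b" "ps a"]
  by (simp add: pair_simps Rr_def algebra_simps)

lemma c2_L: "pair y (ad (\<phi> x) (brd a b)) = - pair (brg x y) (brd a b)"
  by (simp add: pair_ad wg')

definition "EE \<equiv> (\<forall>x y a b. pair (brg x y) (brd a b) = - Rr x y a b)"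

lemma C1_iff: "C1 \<longleftrightarrow> EE"
proof
  assume C: C1
  show EE unfolding EE_def
  proof (intro allI)
    fix x y a b
    from C have "pair (adc (ps a) (brg x y)) b = pair (vsub (vadd (vadd (brg (adc a x) (\<phi> y)) (brg (\<phi> x) (adc a y))) (adc (ad y a) (\<phi> x)))
               (adc (ad x a) (\<phi> y))) b" by metis
    then show "pair (brg x y) (brd a b) = - Rr x y a b" unfolding c1_L c1_pair by (metis minus_minus)
  qed
next
  assume E: EE
  show C1
  proof (intro allI, rule vec_eq_l)
    fix x y a b
    show "pair (adc (ps a) (brg x y)) b = pair (vsub (vadd (vadd (brg (adc a x) (\<phi> y)) (brg (\<phi> x) (adc a y))) (adc (ad y a) (\<phi> x)))
               (adc (ad x a) (\<phi> y))) b" unfolding c1_L c1_pair using E unfolding EE_def by simp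
  qed
qed

lemma C2_iff: "C2 \<longleftrightarrow> EE"
proof
  assume C: C2
  show EE unfolding EE_def
  proof (intro allI)
    fix x y a b
    from C have "pair y (ad (\<phi> x) (brd a b)) = pair y (vsub (vadd (vadd (brd (ad x a) (ps b)) (brd (ps a) (ad x b))) (ad (adc b x) (ps a)))
               (ad (adc a x) (ps b)))" by metis
    then show "pair (brg x y) (brd a b) = - Rr x y a b" unfolding c2_L c2_pair by (metis minus_minus)
  qed
next
  assume E: EE
  show C2
  proof (intro allI, rule vec_eq_r)
    fix x y a b
    show "pair y (ad (\<phi> x) (brd a b)) = pair y (vsub (vadd (vadd (brd (ad x a) (ps b)) (brd (ps a) (ad x b))) (ad (adc b x) (ps a)))
               (ad (adc a x) (ps b)))" unfolding c2_L c2_pair using E unfolding EE_def by simp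
  qed
qed


end

lemma tensor_Delta:
  fixes A B :: "('i::finite \<Rightarrow> 'k::field) \<Rightarrow> ('i \<Rightarrow> 'k)"
  assumes A: "lin_map A" and B: "lin_map B" and br: "bilin br"
  shows "tensor_map A B (Delta br y) (i, j) = pair y (br (dual_map A (basis_vec i)) (dual_map B (basis_vec j)))"
proof -
  let ?u = "dual_map A (basis_vec i)" and ?v = "dual_map B (basis_vec j)"
  have u: "?u k = A (basis_vec k) i" for k by (simp add: dual_map_def pair_basis_r)
  have v: "?v l = B (basis_vec l) j" for l by (simp add: dual_map_def pair_basis_r)
  have l1: "lin_map (\<lambda>x. br x ?v)" using br by (simp add: bilin_def)
  have l2: "lin_map (br k)" for k using br by (simp add: bilin_def)
  have "pair y (br ?u ?v) = (\<Sum>k\<in>UNIV. ?u k * pair y (br (basis_vec k) ?v))"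
    by (rule lin_pair_expand[OF l1])
  also have "\<dots> = (\<Sum>k\<in>UNIV. ?u k * (\<Sum>l\<in>UNIV. ?v l * pair y (br (basis_vec k) (basis_vec l))))"
  proof (rule sum.cong[OF refl])
    fix k show "?u k * pair y (br (basis_vec k) ?v) = ?u k * (\<Sum>l\<in>UNIV. ?v l * pair y (br (basis_vec k) (basis_vec l)))"
      by (subst lin_pair_expand[OF l2]) (rule refl)
  qed
  also have "\<dots> = tensor_map A B (Delta br y) (i, j)"
    by (simp add: u v tensor_map_def Delta_def sum_distrib_left mult.assoc)
  finally show ?thesis by simp
qed

context hctx begin

lemma dual_brg: "dual_map (brg (\<phi> x)) a = vneg (ad x a)"
  by (simp add: ad_circ_as_dual vneg_def)

abbreviation "DD \<equiv> (\<forall>x y. Delta brd (brg x y) =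
            (\<lambda>p. ad_tensor brg \<phi> (\<phi> x) (Delta brd y) p - ad_tensor brg \<phi> (\<phi> y) (Delta brd x) p))"

lemma adt: "ad_tensor brg \<phi> (\<phi> x) (Delta brd y) (i, j)
   = - pair y (brd (ad x (basis_vec i)) (ps (basis_vec j))) - pair y (brd (ps (basis_vec i)) (ad x (basis_vec j)))"
  by (simp add: ad_tensor_def tensor_Delta[OF lin_brg lin_phi bd] tensor_Delta[OF lin_phi lin_brg bd]
      dual_brg lsimps)

lemma DD_iff_basis: "DD \<longleftrightarrow> (\<forall>x y i j. pair (brg x y) (brd (basis_vec i) (basis_vec j)) = - Rr x y (basis_vec i) (basis_vec j))"
proof -
  have "DD \<longleftrightarrow> (\<forall>x y i j. Delta brd (brg x y) (i, j) = ad_tensor brg \<phi> (\<phi> x) (Delta brd y) (i, j) - ad_tensor brg \<phi> (\<phi> y) (Delta brd x) (i, j))"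
    by (auto simp: fun_eq_iff)
  also have "\<dots> \<longleftrightarrow> (\<forall>x y i j. pair (brg x y) (brd (basis_vec i) (basis_vec j)) = - Rr x y (basis_vec i) (basis_vec j))"
  proof -
    have da: "Delta brd z (i, j) = pair z (brd (basis_vec i) (basis_vec j))" for z i j
      by (simp add: Delta_def)
    show ?thesis by (simp only: adt da Rr_def) (simp add: algebra_simps)
  qed
  finally show ?thesis .
qed

definition "FF x y a b = pair (brg x y) (brd a b) + Rr x y a b"

lemma FF_lin1: "FF x y (vadd a a') b = FF x y a b + FF x y a' b" "FF x y (smul c a) b = c * FF x y a b"
  by (simp_all add: FF_def Rr_def lsimps ad_add2 ad_smul2 algebra_simps)
lemma FF_lin2: "FF x y a (vadd b b') = FF x y a b + FF x y a b'" "FF x y a (smul c b) = c * FF x y a b"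
  by (simp_all add: FF_def Rr_def lsimps ad_add2 ad_smul2 algebra_simps)

lemma DD_iff: "DD \<longleftrightarrow> EE"
proof -
  have "(\<forall>x y i j. FF x y (basis_vec i) (basis_vec j) = 0) \<longleftrightarrow> (\<forall>x y a b. FF x y a b = 0)"
  proof
    assume H: "\<forall>x y i j. FF x y (basis_vec i) (basis_vec j) = 0"
    show "\<forall>x y a b. FF x y a b = 0"
    proof (intro allI)
      fix x y a b
      have Z: "FF x y a' (basis_vec j) = 0" for a' j
        by (rule scalar_zero[where f="\<lambda>a. FF x y a (basis_vec j)"]) (simp_all add: FF_lin1 H)
      show "FF x y a b = 0"
        by (rule scalar_zero[where f="\<lambda>b. FF x y a b"]) (simp_all add: FF_lin2 Z)
    qed
  qed simp
  then show ?thesis unfolding DD_iff_basis EE_def FF_def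
    by (simp add: eq_neg_iff_add_eq_0)
qed

theorem main: "matched_pair brg \<phi> brd ps ad adc \<longleftrightarrow> DD"
  unfolding DD_iff
proof
  assume "matched_pair brg \<phi> brd ps ad adc"
  then have C1 unfolding matched_pair_def by (elim conjE) assumption
  then show EE by (rule C1_iff[THEN iffD1])
next
  assume E: EE
  show "matched_pair brg \<phi> brd ps ad adc"
    unfolding matched_pair_def
    by (intro conjI hg hd rep1 rep2 C1_iff[THEN iffD2, OF E] C2_iff[THEN iffD2, OF E])
qed

end

theorem theorem3p7:
  fixes brg :: "('i::finite \<Rightarrow> 'k::field) \<Rightarrow> ('i \<Rightarrow> 'k) \<Rightarrow> ('i \<Rightarrow> 'k)"
    and \<phi> :: "('i \<Rightarrow> 'k) \<Rightarrow> ('i \<Rightarrow> 'k)"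
    and brd :: "('i \<Rightarrow> 'k) \<Rightarrow> ('i \<Rightarrow> 'k) \<Rightarrow> ('i \<Rightarrow> 'k)"
  assumes "hom_lie brg \<phi>" and "weakly_involutive brg \<phi>"
    and "hom_lie brd (dual_map \<phi>)" and "weakly_involutive brd (dual_map \<phi>)"
  shows "matched_pair brg \<phi> brd (dual_map \<phi>) (ad_circ brg \<phi>) (ad_circ_dual brd \<phi>)
     \<longleftrightarrow> (\<forall>x y. Delta brd (brg x y) =
            (\<lambda>p. ad_tensor brg \<phi> (\<phi> x) (Delta brd y) p - ad_tensor brg \<phi> (\<phi> y) (Delta brd x) p))"
  by (rule hctx.main[OF hctx.intro[OF assms]])

end
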